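(* Let $H$ be a reduced double-well type potential, $\beta>0$, and let $\Phi_\beta,\lambda_\beta,\nu_\beta$ be as in the context. Then $\Phi_\beta$ is constant on each cylinder $[0^n1]$ and $[1^n0]$ ($n\ge1$), $\nu_\beta$ has a Jacobian $J_\beta$ which is constant on $[00]$, $[11]$, $[01^n0]$, $[10^n1]$ ($n\ge1$), and: \begin{enumerate} \item $\Phi_\beta(0^n1)=\sum_{k\ge n}\frac{e^{-\beta H_k^1}}{\lambda_\beta^{k-n+1}}\Phi_\beta(10)$ and $\Phi_\beta(0^\infty)=\frac{e^{-\beta H_\infty^1}}{\lambda_\beta-1}\Phi_\beta(10)$; \item $\Phi_\beta(1^n0)=\sum_{k\ge n}\frac{e^{-\beta H_k^0}}{\lambda_\beta^{k-n+1}}\Phi_\beta(01)$ and $\Phi_\beta(1^\infty)=\frac{e^{-\beta H_\infty^0}}{\lambda_\beta-1}\Phi_\beta(01)$; \item if $H_\infty^0=H_\infty^1=0$, then $\max\Phi_\beta=\max\{\Phi_\beta(0^\infty),\Phi_\beta(1^\infty)\}=1$; \item $\nu_\beta[1^n0]=\lambda_\beta^{-(n-1)}\nu_\beta[10]$, and $J_\beta=\lambda_\beta$ on $[11]$; \item $\nu_\beta[0^n1]=\lambda_\beta^{-(n-1)}\nu_\beta[01]$, and $J_\beta=\lambda_\beta$ on $[00]$; \item $\nu_\beta[01^n0]=\lambda_\beta^{-n}e^{-\beta H_n^0}\nu_\beta[10]$, and $J_\beta=\lambda_\beta e^{\beta H_n^0}$ on $[01^n0]$; \item $\nu_\beta[10^n1]=\lambda_\beta^{-n}e^{-\beta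 H_n^1}\nu_\beta[01]$, and $J_\beta=\lambda_\beta e^{\beta H_n^1}$ on $[10^n1]$. \end{enumerate}
   Context: $\Sigma:=\{0,1\}^{\mathbb N}$, $\sigma$ the left shift, cylinders $[i_0\dots i_{n-1}]$. If a function $f$ is constant on $[i_0\dots i_{n-1}]$, $f(i_0\dots i_{n-1})$ denotes that value. A reduced double-well type potential is a continuous nonnegative $H:\Sigma\to\mathbb R$ with summable variation ($\sum_n\sup\{|H(x)-H(y)|:x_j=y_j,\ j<n\}<\infty$) such that $H=0$ on $[00]\cup[11]$, $H=H_n^0>0$ on $[01^n0]$, $H=H_n^1>0$ on $[10^n1]$ ($n\ge1$), and $\sum_{k\ge1}\sup_{n\ge0}|H_k^i-H_{k+n}^i|<\infty$ ($i=0,1$); $H_\infty^i:=\lim_nH_n^i$. Transfer operator $\mathcal L_\beta[\Phi](x)=e^{-\beta H(0x)}\Phi(0x)+e^{-\beta H(1x)}\Phi(1x)$; $\Phi_\beta$ is its unique positive continuous eigenfunction with $\max\Phi_\beta=1$, $\lambda_\beta>0$ its eigenvalue, $\nu_\beta$ the unique probability with $\mathcal L_\beta^*\nu_\beta=\lambda_\beta\nu_\beta$ (one has $\lambda_\beta>1$). A Jacobian of a probability $\nu$ is a nonnegative Borel $J$ such that for every bounded Borel $f$, $\int_{[0]}f\circ\sigma\,J\,d\nu=\int_{[1]}f\circ\sigma\,J\,d\nu=\int f\,d\nu$. *)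

theory Defs
  imports "HOL-Probability.Probability"
begin

text \<open>The full shift on two symbols: points of Sigma are maps nat => bool,
  False encodes the symbol 0, True encodes the symbol 1. Sigma carries the
  product topology (Function_Topology; bool has the discrete order topology)
  and its Borel sigma-algebra.\<close>

type_synonym seq = "nat \<Rightarrow> bool"

definition shift :: "seq \<Rightarrow> seq" where
  "shift x = (\<lambda>n. x (Suc n))"

definition scons :: "bool \<Rightarrow> seq \<Rightarrow> seq" where
  "scons b x = (\<lambda>n. case n of 0 \<Rightarrow> b | Suc m \<Rightarrow> x m)"

definition cyl :: "bool list \<Rightarrow> seq set" where
  "cyl w = {x. \<forall>i<length w. x i = w ! i}"

text \<open>A canonical point of the cylinder [w] (w followed by zeros); used to denote
  the value f(w) of a function f that is constant on [w].\<close>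
definition pt :: "bool list \<Rightarrow> seq" where
  "pt w = (\<lambda>i. if i < length w then w ! i else False)"

definition var :: "(seq \<Rightarrow> real) \<Rightarrow> nat \<Rightarrow> real" where
  "var H n = (SUP p \<in> {(x, y). \<forall>j<n. x j = y j}. \<bar>H (fst p) - H (snd p)\<bar>)"

definition reduced_double_well ::
  "(seq \<Rightarrow> real) \<Rightarrow> (nat \<Rightarrow> real) \<Rightarrow> (nat \<Rightarrow> real) \<Rightarrow> bool" where
  "reduced_double_well H H0 H1 \<longleftrightarrow>
     continuous_on UNIV H \<and> (\<forall>x. 0 \<le> H x) \<and> summable (var H) \<and>
     (\<forall>x \<in> cyl [False, False] \<union> cyl [True, True]. H x = 0) \<and>
     (\<forall>n\<ge>1. 0 < H0 n \<and> (\<forall>x \<in> cyl ([False] @ replicate n True @ [False]). H x = H0 n)) \<and>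
     (\<forall>n\<ge>1. 0 < H1 n \<and> (\<forall>x \<in> cyl ([True] @ replicate n False @ [True]). H x = H1 n)) \<and>
     summable (\<lambda>k. (SUP n. \<bar>H0 (k + 1) - H0 (k + 1 + n)\<bar>)) \<and>
     summable (\<lambda>k. (SUP n. \<bar>H1 (k + 1) - H1 (k + 1 + n)\<bar>))"

definition transfer :: "(seq \<Rightarrow> real) \<Rightarrow> real \<Rightarrow> (seq \<Rightarrow> real) \<Rightarrow> seq \<Rightarrow> real" where
  "transfer H \<beta> \<Phi> x =
     exp (- \<beta> * H (scons False x)) * \<Phi> (scons False x) +
     exp (- \<beta> * H (scons True x)) * \<Phi> (scons True x)"

definition is_jacobian :: "seq measure \<Rightarrow> (seq \<Rightarrow> real) \<Rightarrow> bool" where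
  "is_jacobian \<nu> J \<longleftrightarrow> J \<in> borel_measurable \<nu> \<and> (\<forall>x. 0 \<le> J x) \<and>
     (\<forall>f::seq \<Rightarrow> real. f \<in> borel_measurable \<nu> \<and> bounded (range f) \<longrightarrow>
        (\<integral>x. indicator (cyl [False]) x * f (shift x) * J x \<partial>\<nu>) = (\<integral>x. f x \<partial>\<nu>) \<and>
        (\<integral>x. indicator (cyl [True]) x * f (shift x) * J x \<partial>\<nu>) = (\<integral>x. f x \<partial>\<nu>))"

end

theory Submission
  imports Defs
begin


lemma open_cyl: "open (cyl w)"
proof -
  have "cyl w = {f. \<forall>i\<in>{..<length w}. f i \<in> {w ! i}}" by (auto simp: cyl_def)
  also have "open \<dots>" by (rule product_topology_basis') (simp_all add: discrete_topology_class.open_discrete)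
  finally show ?thesis .
qed

lemma closed_cyl: "closed (cyl w)"
proof -
  have "- cyl w = (\<Union>i<length w. {f. \<forall>j\<in>{i}. f j \<in> {\<not> w ! i}})" by (auto simp: cyl_def)
  also have "open \<dots>" by (intro open_UN ballI product_topology_basis') (simp_all add: discrete_topology_class.open_discrete)
  finally show ?thesis by (simp add: closed_def)
qed

lemma cyl_map_iff: "length v = K \<Longrightarrow> x \<in> cyl v \<longleftrightarrow> map x [0..<K] = v"
proof
  assume "length v = K" "x \<in> cyl v" then show "map x [0..<K] = v" by (auto simp: cyl_def intro!: nth_equalityI)
next
  assume a: "length v = K" "map x [0..<K] = v"
  have "x i = v ! i" if "i < length v" for i
  proof -
    have "v ! i = map x [0..<K] ! i" using a by simp
    also have "\<dots> = x i" using a that by (metis add_0 diff_zero nth_map_upt)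
    finally show ?thesis by simp
  qed
  then show "x \<in> cyl v" by (simp add: cyl_def)
qed

lemma cont_prefix_fun:
  fixes g :: "bool list \<Rightarrow> 'b::topological_space"
  shows "continuous_on UNIV (\<lambda>x::seq. g (map x [0..<K]))"
proof -
  have "open ((\<lambda>x::seq. g (map x [0..<K])) -` B \<inter> UNIV)" for B
  proof -
    have "(\<lambda>x::seq. g (map x [0..<K])) -` B \<inter> UNIV = (\<Union>v\<in>{v. length v = K \<and> g v \<in> B}. cyl v)"
    proof (rule set_eqI, rule iffI)
      fix x assume "x \<in> (\<lambda>x::seq. g (map x [0..<K])) -` B \<inter> UNIV"
      then have "length (map x [0..<K]) = K \<and> g (map x [0..<K]) \<in> B \<and> x \<in> cyl (map x [0..<K])"
        by (simp add: cyl_def)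
      then show "x \<in> (\<Union>v\<in>{v. length v = K \<and> g v \<in> B}. cyl v)" by blast
    next
      fix x assume "x \<in> (\<Union>v\<in>{v. length v = K \<and> g v \<in> B}. cyl v)"
      then obtain v where "length v = K" "g v \<in> B" "x \<in> cyl v" by blast
      then show "x \<in> (\<lambda>x::seq. g (map x [0..<K])) -` B \<inter> UNIV" using cyl_map_iff by simp
    qed
    then show ?thesis by (metis (no_types, lifting) open_UN open_cyl)
  qed
  then show ?thesis by (simp add: continuous_on_open_vimage)
qed

lemma cont_ind_cyl: "continuous_on UNIV (indicator (cyl w) :: seq \<Rightarrow> real)"
proof -
  have "indicator (cyl w) = (\<lambda>x::seq. (\<lambda>v. if v = w then 1 else (0::real)) (map x [0..<length w]))"
    using cyl_map_iff[of w "length w"] by (simp add: indicator_def fun_eq_iff)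
  then show ?thesis using cont_prefix_fun[of "\<lambda>v. if v = w then 1 else (0::real)" "length w"] by simp
qed

lemma cyl_basis:
  assumes "open U" "x \<in> U"
  shows "\<exists>N. cyl (map x [0..<N]) \<subseteq> U"
proof -
  have "openin (product_topology (\<lambda>i. euclidean) UNIV) U" using assms(1) by (simp add: open_fun_def)
  from product_topology_open_contains_basis[OF this assms(2)] obtain X where
    X: "x \<in> (\<Pi>\<^sub>E i\<in>UNIV. X i)" "finite {i. X i \<noteq> topspace (euclidean::bool topology)}"
       "(\<Pi>\<^sub>E i\<in>UNIV. X i) \<subseteq> U" by blast
  have fin: "finite {i. X i \<noteq> UNIV}" using X(2) by simp
  obtain N where N: "\<forall>i\<in>{i. X i \<noteq> UNIV}. i < N"
    using finite_nat_bounded[OF fin] by (auto simp: lessThan_def)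
  have "cyl (map x [0..<N]) \<subseteq> (\<Pi>\<^sub>E i\<in>UNIV. X i)"
  proof
    fix y assume y: "y \<in> cyl (map x [0..<N])"
    show "y \<in> (\<Pi>\<^sub>E i\<in>UNIV. X i)"
    proof (simp add: PiE_iff, intro allI)
      fix i show "y i \<in> X i"
      proof (cases "i < N")
        case True then have "y i = x i" using y by (auto simp: cyl_def)
        then show ?thesis using X(1) by auto
      next
        case False then show ?thesis using N by auto
      qed
    qed
  qed
  then show ?thesis using X(3) by blast
qed

lemma compact_UNIV_seq: "compact (UNIV :: seq set)"
proof -
  have "compact_space (product_topology (\<lambda>i. euclidean :: bool topology) (UNIV :: nat set))"
    unfolding compact_space_product_topology
    by (simp add: compact_space_def compactin_euclidean_iff finite_imp_compact)
  then have "compact_space (euclidean :: seq topology)" by (simp only: euclidean_product_topology)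
  then show ?thesis by (simp add: compact_space_def)
qed

lemma unif_cont:
  fixes f :: "seq \<Rightarrow> real"
  assumes f: "continuous_on UNIV f" and e: "e > 0"
  shows "\<exists>K. \<forall>x y. (\<forall>i<K. x i = y i) \<longrightarrow> \<bar>f x - f y\<bar> < e"
proof -
  define U where "U z = f -` {t. \<bar>t - f z\<bar> < e/2}" for z
  have "open (U z)" for z
  proof -
    have "{t. \<bar>t - f z\<bar> < e/2} = ball (f z) (e/2)" by (auto simp: dist_real_def abs_minus_commute)
    then have "open (f -` {t. \<bar>t - f z\<bar> < e/2} \<inter> UNIV)"
      using f by (simp add: continuous_on_open_vimage)
    then show ?thesis by (simp add: U_def)
  qed
  moreover have "z \<in> U z" for z using e by (simp add: U_def)
  ultimately have "\<forall>z. \<exists>N. cyl (map z [0..<N]) \<subseteq> U z" using cyl_basis by blast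
  then obtain N where N: "\<And>z. cyl (map z [0..<N z]) \<subseteq> U z" by metis
  have cov: "(UNIV::seq set) \<subseteq> (\<Union>z\<in>UNIV. cyl (map z [0..<N z]))"
    by (auto simp: cyl_def)
  have op: "\<And>z. z \<in> UNIV \<Longrightarrow> open (cyl (map z [0..<N z]))" by (rule open_cyl)
  obtain C where C: "C \<subseteq> UNIV" "finite C" "(UNIV::seq set) \<subseteq> (\<Union>z\<in>C. cyl (map z [0..<N z]))"
    by (rule compactE_image[OF compact_UNIV_seq op cov])
  define K where "K = Max (insert 0 (N ` C))"
  have NK: "z \<in> C \<Longrightarrow> N z \<le> K" for z using C(2) by (simp add: K_def)
  show ?thesis
  proof (intro exI allI impI)
    fix x y :: seq assume xy: "\<forall>i<K. x i = y i"
    obtain z where z: "z \<in> C" "x \<in> cyl (map z [0..<N z])" using C(3) by blast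
    have "y \<in> cyl (map z [0..<N z])" using z NK[OF z(1)] xy by (auto simp: cyl_def)
    then have "y \<in> U z" "x \<in> U z" using z N by blast+
    then have "\<bar>f y - f z\<bar> < e/2" "\<bar>f x - f z\<bar> < e/2" by (simp_all add: U_def)
    then show "\<bar>f x - f y\<bar> < e" by linarith
  qed
qed

definition pre :: "bool list \<Rightarrow> seq \<Rightarrow> seq" where
  "pre u x = foldr scons u x"

lemma pre_Nil[simp]: "pre [] x = x" and pre_Cons[simp]: "pre (a # u) x = scons a (pre u x)"
  by (simp_all add: pre_def)

lemma pre_snoc: "pre (u @ [a]) x = pre u (scons a x)"
  by (simp add: pre_def)

lemma pre_low: "i < length u \<Longrightarrow> pre u x i = u ! i"
proof (induction u arbitrary: i)
  case (Cons a u) then show ?case by (cases i) (auto simp: scons_def)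
qed simp

lemma pre_high: "pre u x (length u + i) = x i"
  by (induction u) (auto simp: scons_def)

lemma scons_0[simp]: "scons a x 0 = a" and scons_Suc[simp]: "scons a x (Suc i) = x i"
  by (simp_all add: scons_def)

lemma transfer_mono:
  assumes "\<And>x. f x \<le> g x" shows "(transfer H \<beta> ^^ N) f x \<le> (transfer H \<beta> ^^ N) g x"
proof (induction N arbitrary: x)
  case (Suc N)
  then show ?case by (simp add: transfer_def add_mono mult_left_mono)
qed (simp add: assms)

lemma transfer_scale:
  "(transfer H \<beta> ^^ N) (\<lambda>x. c * f x) x = c * (transfer H \<beta> ^^ N) f x"
proof (induction N arbitrary: x)
  case (Suc N)
  then show ?case by (simp add: transfer_def algebra_simps)
qed simp

lemma transfer_eigen_pow:
  assumes "\<forall>x. transfer H \<beta> \<Phi> x = lam * \<Phi> x"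
  shows "(transfer H \<beta> ^^ N) \<Phi> x = lam ^ N * \<Phi> x"
proof (induction N arbitrary: x)
  case (Suc N)
  have e: "(transfer H \<beta> ^^ N) \<Phi> = (\<lambda>x. lam ^ N * \<Phi> x)" by (rule ext) (rule Suc.IH)
  have "(transfer H \<beta> ^^ Suc N) \<Phi> x = transfer H \<beta> (\<lambda>x. lam ^ N * \<Phi> x) x"
    by (simp only: funpow.simps comp_apply e)
  also have "\<dots> = lam ^ N * transfer H \<beta> \<Phi> x"
    using transfer_scale[where N=1 and c="lam ^ N" and f=\<Phi> and H=H and \<beta>=\<beta> and x=x] by simp
  finally show ?case using assms by simp
qed simp

lemma transfer_diff:
  assumes fe: "\<forall>x' y'. (\<forall>i<K+N. x' i = y' i) \<longrightarrow> \<bar>f x' - f y'\<bar> \<le> e"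
    and xy: "\<forall>i<K. x i = y i"
    and R: "\<forall>u. u \<noteq> [] \<longrightarrow> H (pre u x) = H (pre u y)"
  shows "\<bar>(transfer H \<beta> ^^ N) f x - (transfer H \<beta> ^^ N) f y\<bar> \<le> e * (transfer H \<beta> ^^ N) (\<lambda>_. 1) x"
  using assms
proof (induction N arbitrary: K x y)
  case 0 then show ?case by simp
next
  case (Suc N)
  let ?g = "(transfer H \<beta> ^^ N) f" and ?o = "(transfer H \<beta> ^^ N) (\<lambda>_. 1)"
  have step: "\<bar>?g (scons a x) - ?g (scons a y)\<bar> \<le> e * ?o (scons a x)" for a
  proof (rule Suc.IH[of "Suc K"])
    show "\<forall>x' y'. (\<forall>i<Suc K + N. x' i = y' i) \<longrightarrow> \<bar>f x' - f y'\<bar> \<le> e" using Suc.prems(1) by simp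
    show "\<forall>i<Suc K. scons a x i = scons a y i" using Suc.prems(2) by (auto simp: scons_def split: nat.split)
    show "\<forall>u. u \<noteq> [] \<longrightarrow> H (pre u (scons a x)) = H (pre u (scons a y))"
      using Suc.prems(3) by (metis pre_snoc snoc_eq_iff_butlast)
  qed
  have Hx: "H (scons a x) = H (scons a y)" for a using Suc.prems(3)[rule_format, of "[a]"] by simp
  have "\<bar>(transfer H \<beta> ^^ Suc N) f x - (transfer H \<beta> ^^ Suc N) f y\<bar>
     = \<bar>exp (- \<beta> * H (scons False x)) * (?g (scons False x) - ?g (scons False y)) +
        exp (- \<beta> * H (scons True x)) * (?g (scons True x) - ?g (scons True y))\<bar>"
    by (simp add: transfer_def Hx algebra_simps)
  also have "\<dots> \<le> exp (- \<beta> * H (scons False x)) * \<bar>?g (scons False x) - ?g (scons False y)\<bar> +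
        exp (- \<beta> * H (scons True x)) * \<bar>?g (scons True x) - ?g (scons True y)\<bar>"
    by (metis (no_types, lifting) abs_exp_cancel abs_mult abs_triangle_ineq)
  also have "\<dots> \<le> exp (- \<beta> * H (scons False x)) * (e * ?o (scons False x)) +
        exp (- \<beta> * H (scons True x)) * (e * ?o (scons True x))"
    by (intro add_mono mult_left_mono step) auto
  also have "\<dots> = e * (transfer H \<beta> ^^ Suc N) (\<lambda>_. 1) x"
    by (simp add: transfer_def algebra_simps)
  finally show ?case .
qed

lemma cyl_agree: "x \<in> cyl c \<Longrightarrow> \<forall>i<L. x i = y i \<Longrightarrow> length c \<le> L \<Longrightarrow> y \<in> cyl c"
  by (auto simp: cyl_def)

lemma nth_well: "i < Suc (Suc n) \<Longrightarrow> (a # replicate n b @ [c]) ! i = (if i = 0 then a else if i \<le> n then b else c)"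
  by (cases i) (auto simp: nth_append)

lemma cyl_well: "x \<in> cyl (a # replicate n b @ [c]) \<longleftrightarrow> x 0 = a \<and> (\<forall>i. 1 \<le> i \<and> i \<le> n \<longrightarrow> x i = b) \<and> x (Suc n) = c"
proof -
  have "x \<in> cyl (a # replicate n b @ [c]) \<longleftrightarrow> (\<forall>i<Suc (Suc n). x i = (if i = 0 then a else if i \<le> n then b else c))"
    by (simp add: cyl_def nth_well)
  also have "\<dots> \<longleftrightarrow> x 0 = a \<and> (\<forall>i. 1 \<le> i \<and> i \<le> n \<longrightarrow> x i = b) \<and> x (Suc n) = c"
  proof
    assume A: "\<forall>i<Suc (Suc n). x i = (if i = 0 then a else if i \<le> n then b else c)"
    have "x i = b" if "1 \<le> i" "i \<le> n" for i using A[rule_format, of i] that by auto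
    moreover have "x 0 = a" using A[rule_format, of 0] by simp
    moreover have "x (Suc n) = c" using A[rule_format, of "Suc n"] by simp
    ultimately show "x 0 = a \<and> (\<forall>i. 1 \<le> i \<and> i \<le> n \<longrightarrow> x i = b) \<and> x (Suc n) = c" by blast
  next
    assume B: "x 0 = a \<and> (\<forall>i. 1 \<le> i \<and> i \<le> n \<longrightarrow> x i = b) \<and> x (Suc n) = c"
    show "\<forall>i<Suc (Suc n). x i = (if i = 0 then a else if i \<le> n then b else c)"
    proof (intro allI impI)
      fix i assume "i < Suc (Suc n)"
      then consider "i = 0" | "1 \<le> i \<and> i \<le> n" | "i = Suc n" by linarith
      then show "x i = (if i = 0 then a else if i \<le> n then b else c)" using B by cases auto
    qed
  qed
  finally show ?thesis .
qed

lemma cyl_rep: "x \<in> cyl (replicate n b @ [c]) \<longleftrightarrow> (\<forall>i<n. x i = b) \<and> x n = c"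
proof -
  have "(replicate n b @ [c]) ! i = (if i < n then b else c)" if "i < Suc n" for i
    using that by (auto simp: nth_append)
  then show ?thesis by (auto simp: cyl_def less_Suc_eq)
qed

lemma cyl_two: "x \<in> cyl [a, b] \<longleftrightarrow> x 0 = a \<and> x 1 = b"
  by (auto simp: cyl_def less_Suc_eq)

lemma rdw_H0: "reduced_double_well H H0 H1 \<Longrightarrow> 1 \<le> n \<Longrightarrow> x \<in> cyl ([False] @ replicate n True @ [False]) \<Longrightarrow> H x = H0 n"
  unfolding reduced_double_well_def by blast
lemma rdw_H1: "reduced_double_well H H0 H1 \<Longrightarrow> 1 \<le> n \<Longrightarrow> x \<in> cyl ([True] @ replicate n False @ [True]) \<Longrightarrow> H x = H1 n"
  unfolding reduced_double_well_def by blast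
lemma rdw_H0pos: "reduced_double_well H H0 H1 \<Longrightarrow> 1 \<le> n \<Longrightarrow> 0 < H0 n"
  unfolding reduced_double_well_def by blast
lemma rdw_H1pos: "reduced_double_well H H0 H1 \<Longrightarrow> 1 \<le> n \<Longrightarrow> 0 < H1 n"
  unfolding reduced_double_well_def by blast
lemma rdw_00: "reduced_double_well H H0 H1 \<Longrightarrow> x \<in> cyl [False, False] \<Longrightarrow> H x = 0"
  unfolding reduced_double_well_def by blast
lemma rdw_11: "reduced_double_well H H0 H1 \<Longrightarrow> x \<in> cyl [True, True] \<Longrightarrow> H x = 0"
  unfolding reduced_double_well_def by blast
lemma rdw_cont: "reduced_double_well H H0 H1 \<Longrightarrow> continuous_on UNIV H"
  unfolding reduced_double_well_def by blast
lemma rdw_nonneg: "reduced_double_well H H0 H1 \<Longrightarrow> 0 \<le> H x"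
  unfolding reduced_double_well_def by blast

lemma H_det:
  assumes rdw: "reduced_double_well H H0 H1"
    and vw: "\<forall>i<L. v i = w i" and j: "1 \<le> j" "j + 1 < L" "v j \<noteq> v (j + 1)"
  shows "H v = H w"
proof (cases "v 0 = v 1")
  case True
  have "v \<in> cyl [v 0, v 0]" by (simp add: cyl_two True)
  moreover have "w \<in> cyl [v 0, v 0]" using cyl_agree[OF calculation vw] j by simp
  ultimately show ?thesis using rdw_00[OF rdw] rdw_11[OF rdw]
    by (cases "v 0") auto
next
  case False
  have ex: "\<exists>k. 2 \<le> k \<and> k \<le> j + 1 \<and> v k \<noteq> v 1"
  proof (cases "v j = v 1")
    case True then show ?thesis using j by (intro exI[of _ "j+1"]) auto
  next
    case F: False
    then have "j \<noteq> 1" by auto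
    then show ?thesis using F j by (intro exI[of _ j]) auto
  qed
  define k where "k = (LEAST k. 2 \<le> k \<and> v k \<noteq> v 1)"
  have k: "2 \<le> k" "v k \<noteq> v 1" "k \<le> j + 1"
    using ex LeastI_ex[of "\<lambda>k. 2 \<le> k \<and> v k \<noteq> v 1"] Least_le[of "\<lambda>k. 2 \<le> k \<and> v k \<noteq> v 1"]
    unfolding k_def by (metis le_trans)+
  have mid: "v i = v 1" if "1 \<le> i" "i < k" for i
  proof (cases "i = 1")
    case False then have "2 \<le> i" using that by auto
    then show ?thesis using not_less_Least[of i "\<lambda>k. 2 \<le> k \<and> v k \<noteq> v 1"] that k_def by blast
  qed simp
  define n where "n = k - 1"
  have kn: "k = Suc n" "1 \<le> n" using k by (auto simp: n_def)
  have vc: "v \<in> cyl (v 0 # replicate n (v 1) @ [\<not> v 1])"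
    unfolding cyl_well
  proof (intro conjI allI impI refl)
    fix i assume "1 \<le> i \<and> i \<le> n" then show "v i = v 1" using kn by (intro mid) auto
  next
    show "v (Suc n) = (\<not> v 1)" using k(2) kn by simp
  qed
  have wc: "w \<in> cyl (v 0 # replicate n (v 1) @ [\<not> v 1])"
    using cyl_agree[OF vc vw] k kn j by simp
  have "v 0 = (\<not> v 1)" using False by auto
  then show ?thesis
  proof (cases "v 0")
    case True
    then have e: "v 0 # replicate n (v 1) @ [\<not> v 1] = [True] @ replicate n False @ [True]"
      using \<open>v 0 = (\<not> v 1)\<close> by simp
    show ?thesis using rdw_H1[OF rdw kn(2), of v] rdw_H1[OF rdw kn(2), of w] vc wc unfolding e by simp
  next
    case F: False
    then have e: "v 0 # replicate n (v 1) @ [\<not> v 1] = [False] @ replicate n True @ [False]"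
      using \<open>v 0 = (\<not> v 1)\<close> by simp
    show ?thesis using rdw_H0[OF rdw kn(2), of v] rdw_H0[OF rdw kn(2), of w] vc wc unfolding e by simp
  qed
qed

lemma pre_agree:
  assumes "\<forall>i<L. x i = y i" shows "\<forall>i<length u + L. pre u x i = pre u y i"
proof (intro allI impI)
  fix i assume i: "i < length u + L"
  show "pre u x i = pre u y i"
  proof (cases "i < length u")
    case True then show ?thesis by (simp add: pre_low)
  next
    case False
    then obtain t where t: "i = length u + t" by (metis le_add_diff_inverse not_less)
    then show ?thesis using assms i by (simp add: pre_high)
  qed
qed

lemma Phi_const:
  assumes rdw: "reduced_double_well H H0 H1"
    and Phi_cont: "continuous_on UNIV \<Phi>"
    and Phi_pos: "\<forall>x. 0 < \<Phi> x"
    and Phi_le: "\<forall>x. \<Phi> x \<le> 1"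
    and lam_pos: "lam > 0"
    and eigen: "\<forall>x. transfer H \<beta> \<Phi> x = lam * \<Phi> x"
    and xy: "\<forall>i<L. x i = y i" and j: "j + 1 < L" "x j \<noteq> x (j + 1)"
  shows "\<Phi> x = \<Phi> y"
proof -
  have R: "\<forall>u. u \<noteq> [] \<longrightarrow> H (pre u x) = H (pre u y)"
  proof (intro allI impI)
    fix u :: "bool list" assume "u \<noteq> []"
    then have "1 \<le> length u + j" by (cases u) auto
    moreover have "pre u x (length u + j) \<noteq> pre u x (length u + j + 1)"
      using j pre_high[of u x j] pre_high[of u x "j+1"] by simp
    ultimately show "H (pre u x) = H (pre u y)"
      using H_det[OF rdw pre_agree[OF xy, of u], of "length u + j"] j by simp
  qed
  obtain z0 where z0: "\<forall>y. \<Phi> z0 \<le> \<Phi> y"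
    using continuous_attains_inf[OF compact_UNIV_seq _ Phi_cont] by auto
  define m where "m = \<Phi> z0"
  have m: "m > 0" "\<And>y. m \<le> \<Phi> y" using z0 Phi_pos by (auto simp: m_def)
  have small: "\<bar>\<Phi> x - \<Phi> y\<bar> \<le> e" if e: "e > 0" for e
  proof -
    obtain K0 where K0: "\<forall>x y. (\<forall>i<K0. x i = y i) \<longrightarrow> \<bar>\<Phi> x - \<Phi> y\<bar> < e * m"
      using unif_cont[OF Phi_cont, of "e * m"] e m by auto
    have fe: "\<forall>x' y'. (\<forall>i<L+K0. x' i = y' i) \<longrightarrow> \<bar>\<Phi> x' - \<Phi> y'\<bar> \<le> e * m"
      using K0 by (metis less_imp_le trans_less_add2)
    have d: "\<bar>(transfer H \<beta> ^^ K0) \<Phi> x - (transfer H \<beta> ^^ K0) \<Phi> y\<bar> \<le> e * m * (transfer H \<beta> ^^ K0) (\<lambda>_. 1) x"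
      by (rule transfer_diff[OF fe xy R])
    have "(transfer H \<beta> ^^ K0) (\<lambda>_. 1) x \<le> (transfer H \<beta> ^^ K0) (\<lambda>x. (1/m) * \<Phi> x) x"
      by (rule transfer_mono) (use m in \<open>simp add: field_simps\<close>)
    also have "\<dots> = (1/m) * (lam ^ K0 * \<Phi> x)"
      by (simp only: transfer_scale transfer_eigen_pow[OF eigen])
    also have "\<dots> \<le> (1/m) * lam ^ K0"
      using Phi_le m lam_pos by (simp add: field_simps)
    finally have o: "(transfer H \<beta> ^^ K0) (\<lambda>_. 1) x \<le> (1/m) * lam ^ K0" .
    have "lam ^ K0 * \<bar>\<Phi> x - \<Phi> y\<bar> = \<bar>(transfer H \<beta> ^^ K0) \<Phi> x - (transfer H \<beta> ^^ K0) \<Phi> y\<bar>"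
      using lam_pos by (simp add: transfer_eigen_pow[OF eigen] abs_mult right_diff_distrib[symmetric])
    also have "\<dots> \<le> e * m * (transfer H \<beta> ^^ K0) (\<lambda>_. 1) x" by (rule d)
    also have "\<dots> \<le> e * m * ((1/m) * lam ^ K0)"
      using o e m by (intro mult_left_mono) auto
    also have "\<dots> = lam ^ K0 * e" using m by simp
    finally show ?thesis using lam_pos by simp
  qed
  show ?thesis
  proof (rule ccontr)
    assume "\<Phi> x \<noteq> \<Phi> y"
    then have "\<bar>\<Phi> x - \<Phi> y\<bar> > 0" by simp
    from small[OF half_gt_zero[OF this]] this show False by simp
  qed
qed

lemma scons_cyl: "scons b x \<in> cyl (c # w) \<longleftrightarrow> b = c \<and> x \<in> cyl w"
  by (simp add: cyl_def All_less_Suc2)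

lemma pt_cyl: "pt w \<in> cyl w"
  by (simp add: cyl_def pt_def)

lemma scons_const: "scons b (\<lambda>_. b) = (\<lambda>_. b)"
  by (simp add: fun_eq_iff scons_def split: nat.split)

lemma const_cyl2: "(\<lambda>_. b) \<in> cyl [b, b]"
  by (simp add: cyl_two)

definition hh :: "(nat \<Rightarrow> real) \<Rightarrow> (nat \<Rightarrow> real) \<Rightarrow> bool \<Rightarrow> nat \<Rightarrow> real" where
  "hh H0 H1 b n = (if b then H0 n else H1 n)"

definition qq :: "bool \<Rightarrow> seq" where "qq b = scons (\<not> b) (\<lambda>_. b)"

lemma rdw_hh: "reduced_double_well H H0 H1 \<Longrightarrow> 1 \<le> n \<Longrightarrow> x \<in> cyl ((\<not> b) # replicate n b @ [\<not> b]) \<Longrightarrow> H x = hh H0 H1 b n"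
  using rdw_H0[of H H0 H1 n x] rdw_H1[of H H0 H1 n x] by (cases b) (auto simp: hh_def)

lemma rdw_bb: "reduced_double_well H H0 H1 \<Longrightarrow> x \<in> cyl [b, b] \<Longrightarrow> H x = 0"
  using rdw_00 rdw_11 by (cases b) auto

lemma transfer_b: "transfer H \<beta> \<Phi> x = exp (- \<beta> * H (scons b x)) * \<Phi> (scons b x) +
   exp (- \<beta> * H (scons (\<not> b) x)) * \<Phi> (scons (\<not> b) x)"
  by (cases b) (simp_all add: transfer_def)

context
  fixes H :: "seq \<Rightarrow> real" and H0 H1 :: "nat \<Rightarrow> real" and \<beta> lam :: real and \<Phi> :: "seq \<Rightarrow> real"
  assumes rdw: "reduced_double_well H H0 H1"
    and Phi_cont: "continuous_on UNIV \<Phi>"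
    and Phi_pos: "\<forall>x. 0 < \<Phi> x"
    and Phi_le: "\<forall>x. \<Phi> x \<le> 1"
    and lam_pos: "lam > 0"
    and eigen: "\<forall>x. transfer H \<beta> \<Phi> x = lam * \<Phi> x"
begin

lemma G_const:
  assumes n: "1 \<le> n" and x: "x \<in> cyl (replicate n b @ [\<not> b])" and y: "y \<in> cyl (replicate n b @ [\<not> b])"
  shows "\<Phi> x = \<Phi> y"
proof (rule Phi_const[OF rdw Phi_cont Phi_pos Phi_le lam_pos eigen, of "Suc n" _ _ "n - 1"])
  show "\<forall>i<Suc n. x i = y i" using x y by (auto simp: cyl_rep less_Suc_eq)
  show "n - 1 + 1 < Suc n" using n by simp
  show "x (n - 1) \<noteq> x (n - 1 + 1)" using x n by (simp add: cyl_rep)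
qed

lemma G_q: "\<Phi> (scons (\<not> b) x) = \<Phi> (qq b)" if "x \<in> cyl (b # w)"
proof (rule G_const[of 1 _ "\<not> b"])
  have "x 0 = b" using that by (auto simp: cyl_def)
  then show "scons (\<not> b) x \<in> cyl (replicate 1 (\<not> b) @ [\<not> \<not> b])" by (simp add: cyl_two)
  show "qq b \<in> cyl (replicate 1 (\<not> b) @ [\<not> \<not> b])" by (simp add: qq_def cyl_two)
qed simp

lemma G_rec:
  assumes n: "1 \<le> n" and x: "x \<in> cyl (replicate n b @ [\<not> b])"
  shows "lam * \<Phi> x = \<Phi> (scons b x) + exp (- \<beta> * hh H0 H1 b n) * \<Phi> (qq b)"
proof -
  define w where "w = replicate (n - 1) b @ [\<not> b]"
  have e: "replicate n b @ [\<not> b] = b # w" using n unfolding w_def by (cases n) auto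
  have xw: "x \<in> cyl (b # w)" using x e by simp
  have "x 0 = b" using x n by (simp add: cyl_rep)
  then have "scons b x \<in> cyl [b, b]" by (simp add: cyl_two)
  then have h0: "H (scons b x) = 0" by (rule rdw_bb[OF rdw])
  have "scons (\<not> b) x \<in> cyl ((\<not> b) # replicate n b @ [\<not> b])" using x by (simp add: scons_cyl)
  then have h1: "H (scons (\<not> b) x) = hh H0 H1 b n" by (rule rdw_hh[OF rdw n])
  show ?thesis using eigen[rule_format, of x] transfer_b[of H \<beta> \<Phi> x b] h0 h1 G_q[OF xw(1)] by simp
qed

lemma lam_gt1: "lam > 1"
proof -
  have "lam * \<Phi> (\<lambda>_. False) = \<Phi> (\<lambda>_. False) + exp (- \<beta> * H (qq False)) * \<Phi> (qq False)"
    using eigen[rule_format, of "\<lambda>_. False"] rdw_bb[OF rdw const_cyl2[of False]]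
    by (simp add: transfer_def scons_const qq_def)
  moreover have "exp (- \<beta> * H (qq False)) * \<Phi> (qq False) > 0" using Phi_pos by simp
  ultimately have "lam * \<Phi> (\<lambda>_. False) > 1 * \<Phi> (\<lambda>_. False)" by simp
  then show ?thesis using Phi_pos[rule_format, of "\<lambda>_. False"] mult_less_cancel_right_pos by blast
qed

lemma G_fix: "\<Phi> (\<lambda>_. b) = exp (- \<beta> * H (qq b)) / (lam - 1) * \<Phi> (qq b)"
proof -
  have "lam * \<Phi> (\<lambda>_. b) = \<Phi> (\<lambda>_. b) + exp (- \<beta> * H (qq b)) * \<Phi> (qq b)"
    using eigen[rule_format, of "\<lambda>_. b"] transfer_b[of H \<beta> \<Phi> "\<lambda>_. b" b] rdw_bb[OF rdw const_cyl2[of b]]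
    by (simp add: scons_const qq_def)
  then show ?thesis using lam_gt1 by (simp add: field_simps)
qed

definition aa :: "bool \<Rightarrow> nat \<Rightarrow> real" where "aa b n = \<Phi> (pt (replicate n b @ [\<not> b]))"

lemma aa_rec: "1 \<le> n \<Longrightarrow> lam * aa b n = aa b (Suc n) + exp (- \<beta> * hh H0 H1 b n) * \<Phi> (qq b)"
proof -
  assume n: "1 \<le> n"
  have "\<Phi> (scons b (pt (replicate n b @ [\<not> b]))) = aa b (Suc n)"
    unfolding aa_def
    by (rule G_const[of "Suc n" _ b]) (simp_all add: scons_cyl pt_cyl)
  then show ?thesis using G_rec[OF n pt_cyl] unfolding aa_def by simp
qed

lemma aa_partial: "1 \<le> n \<Longrightarrow> (\<Sum>k<m. exp (- \<beta> * hh H0 H1 b (n + k)) / lam ^ (k + 1) * \<Phi> (qq b)) = aa b n - aa b (n + m) / lam ^ m"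
proof (induction m)
  case (Suc m)
  have "lam * aa b (n + m) = aa b (Suc (n + m)) + exp (- \<beta> * hh H0 H1 b (n + m)) * \<Phi> (qq b)"
    using aa_rec Suc.prems by simp
  then have "exp (- \<beta> * hh H0 H1 b (n + m)) / lam ^ (m + 1) * \<Phi> (qq b) = aa b (n + m) / lam ^ m - aa b (n + Suc m) / lam ^ Suc m"
    using lam_pos by (simp add: field_simps)
  then show ?case using Suc by simp
qed simp

lemma G_sums:
  assumes n: "1 \<le> n" and x: "x \<in> cyl (replicate n b @ [\<not> b])"
  shows "(\<lambda>k. exp (- \<beta> * hh H0 H1 b (n + k)) / lam ^ (k + 1) * \<Phi> (qq b)) sums \<Phi> x"
proof -
  have "\<Phi> x = aa b n" unfolding aa_def by (rule G_const[OF n x pt_cyl])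
  moreover have "(\<lambda>m. aa b n - aa b (n + m) / lam ^ m) \<longlonglongrightarrow> aa b n - 0"
  proof (intro tendsto_intros)
    have "(\<lambda>m. (1 / lam) ^ m) \<longlonglongrightarrow> 0" using lam_gt1 by (intro LIMSEQ_power_zero) simp
    moreover have "\<bar>aa b (n + m) / lam ^ m\<bar> \<le> (1 / lam) ^ m" for m
      using Phi_pos Phi_le lam_pos by (simp add: aa_def abs_of_pos power_one_over divide_right_mono)
    ultimately show "(\<lambda>m. aa b (n + m) / lam ^ m) \<longlonglongrightarrow> 0"
      using Lim_null_comparison[of "\<lambda>m. aa b (n + m) / lam ^ m" "\<lambda>m. (1 / lam) ^ m" sequentially] by simp
  qed
  ultimately show ?thesis unfolding sums_def using aa_partial[OF n] by simp
qed

lemma G_lim: "lim (hh H0 H1 b) = H (qq b)"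
proof -
  define sq where "sq n = pt ((\<not> b) # replicate n b @ [\<not> b])" for n
  have sq_i: "sq n i = qq b i" if "i \<le> n" for n i
  proof -
    have "i < length ((\<not> b) # replicate n b @ [\<not> b])" using that by simp
    then show ?thesis using that
      by (simp add: sq_def pt_def nth_well[of i n] qq_def scons_def split: nat.split del: One_nat_def) 
  qed
  have "sq \<longlonglongrightarrow> qq b"
  proof (rule topological_tendstoI)
    fix S assume "open S" "qq b \<in> S"
    then obtain N where N: "cyl (map (qq b) [0..<N]) \<subseteq> S" using cyl_basis by blast
    have "sq n \<in> cyl (map (qq b) [0..<N])" if "N \<le> n" for n
      using that sq_i by (auto simp: cyl_def)
    then show "eventually (\<lambda>n. sq n \<in> S) sequentially"
      using N unfolding eventually_sequentially by blast
  qed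
  then have "(\<lambda>n. H (sq n)) \<longlonglongrightarrow> H (qq b)"
    by (rule continuous_on_tendsto_compose[OF rdw_cont[OF rdw]]) auto
  moreover have ev: "eventually (\<lambda>n. hh H0 H1 b n = H (sq n)) sequentially"
    unfolding eventually_sequentially
  proof (intro exI[of _ 1] allI impI)
    fix n :: nat assume "1 \<le> n"
    show "hh H0 H1 b n = H (sq n)" using rdw_hh[OF rdw \<open>1 \<le> n\<close> pt_cyl] by (simp add: sq_def)
  qed
  ultimately have "(\<lambda>n. hh H0 H1 b n) \<longlonglongrightarrow> H (qq b)" using tendsto_cong[OF ev] by blast
  then show ?thesis by (rule limI)
qed

lemma G_lt:
  assumes beta: "\<beta> > 0" and H0: "H (qq b) = 0" and n: "1 \<le> n" and x: "x \<in> cyl (replicate n b @ [\<not> b])"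
  shows "\<Phi> x < \<Phi> (\<lambda>_. b)"
proof -
  define c where "c = \<Phi> (qq b)"
  have c: "c > 0" using Phi_pos by (simp add: c_def)
  define f where "f k = exp (- \<beta> * hh H0 H1 b (n + k)) / lam ^ (k + 1) * c" for k
  define g where "g k = c / lam * (1 / lam) ^ k" for k
  have fs: "f sums \<Phi> x" unfolding f_def c_def by (rule G_sums[OF n x])
  have "(\<lambda>k. (1 / lam) ^ k) sums (1 / (1 - 1 / lam))"
    using lam_gt1 by (intro geometric_sums) simp
  then have "g sums (c / lam * (1 / (1 - 1 / lam)))" unfolding g_def by (rule sums_mult)
  moreover have "c / lam * (1 / (1 - 1 / lam)) = \<Phi> (\<lambda>_. b)"
  proof -
    have "1 - 1 / lam = (lam - 1) / lam" using lam_pos by (simp add: diff_divide_distrib)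
    then have "c / lam * (1 / (1 - 1 / lam)) = c / (lam - 1)" using lam_gt1 by simp
    also have "\<dots> = \<Phi> (\<lambda>_. b)" using G_fix[of b] H0 by (simp add: c_def)
    finally show ?thesis .
  qed
  ultimately have gs: "g sums \<Phi> (\<lambda>_. b)" by simp
  have hpos: "hh H0 H1 b m > 0" if "1 \<le> m" for m
    using rdw_H0pos[OF rdw that] rdw_H1pos[OF rdw that] by (cases b) (auto simp: hh_def)
  have gk: "g k = 1 * (c / lam ^ (k + 1))" for k
    using lam_pos by (simp add: g_def power_one_over)
  have fk: "f k = exp (- \<beta> * hh H0 H1 b (n + k)) * (c / lam ^ (k + 1))" for k
    by (simp add: f_def)
  have cpos: "c / lam ^ (k + 1) > 0" for k using c lam_pos by simp
  have le: "f k \<le> g k" for k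
  proof -
    have "exp (- \<beta> * hh H0 H1 b (n + k)) \<le> 1" using hpos[of "n+k"] n beta by simp
    then show ?thesis unfolding fk gk by (rule mult_right_mono) (use cpos[of k] in simp)
  qed
  have lt: "f 0 < g 0"
  proof -
    have "exp (- \<beta> * hh H0 H1 b n) < 1" using hpos[OF n] beta by simp
    then show ?thesis unfolding fk gk using cpos[of 0] by (simp only: mult_strict_right_mono add_0_right)
  qed
  have ds: "(\<lambda>k. g k - f k) sums (\<Phi> (\<lambda>_. b) - \<Phi> x)" by (rule sums_diff[OF gs fs])
  have M1: "(\<lambda>k. if k = 0 then g k - f k else 0) sums (g 0 - f 0)"
    using sums_single[of 0 "\<lambda>k. g k - f k"] by simp
  have M2: "\<And>k. (if k = 0 then g k - f k else 0) \<le> g k - f k" using le by simp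
  have "g 0 - f 0 \<le> \<Phi> (\<lambda>_. b) - \<Phi> x" by (rule sums_le[OF M2 M1 ds])
  then show ?thesis using lt by simp
qed

end

lemma point_cases: "x = (\<lambda>_. x 0) \<or> (\<exists>n\<ge>1. x \<in> cyl (replicate n (x 0) @ [\<not> x 0]))"
proof (cases "\<forall>i. x i = x 0")
  case True
  have "x = (\<lambda>_. x 0)" by (rule ext) (use True in blast)
  then show ?thesis by blast
next
  case False
  define n where "n = (LEAST i. x i \<noteq> x 0)"
  have nx: "x n \<noteq> x 0" using False LeastI_ex[of "\<lambda>i. x i \<noteq> x 0"] by (auto simp: n_def)
  have lt: "x i = x 0" if "i < n" for i using not_less_Least[of i "\<lambda>i. x i \<noteq> x 0"] that n_def by blast
  have n0: "n \<noteq> 0" using nx by (cases n) auto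
  have "(\<forall>i<n. x i = x 0) \<and> x n = (\<not> x 0)" using nx lt by blast
  moreover have "1 \<le> n" using n0 by simp
  ultimately have "1 \<le> n \<and> x \<in> cyl (replicate n (x 0) @ [\<not> x 0])" unfolding cyl_rep by blast
  then show ?thesis by blast
qed

lemma cyl_Nil: "cyl [] = UNIV" by (simp add: cyl_def)

lemma cyl_Cons_shift: "x \<in> cyl (a # w) \<longleftrightarrow> x 0 = a \<and> shift x \<in> cyl w"
  by (simp add: cyl_def shift_def All_less_Suc2)

lemma cyl_one: "x \<in> cyl [a] \<longleftrightarrow> x 0 = a"
  by (simp add: cyl_def)

lemma cyl_inter: "cyl v \<inter> cyl w \<in> insert {} (range cyl)"
proof (cases "\<exists>i < min (length v) (length w). v ! i \<noteq> w ! i")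
  case True
  then have "cyl v \<inter> cyl w = {}" by (auto simp: cyl_def)
  then show ?thesis by simp
next
  case False
  show ?thesis
  proof (cases "length v \<le> length w")
    case True
    then have "cyl v \<inter> cyl w = cyl w" using False by (auto simp: cyl_def)
    then show ?thesis by simp
  next
    case F: False
    then have "cyl v \<inter> cyl w = cyl v" using False by (auto simp: cyl_def)
    then show ?thesis by simp
  qed
qed

lemma Int_stable_cyl: "Int_stable (insert {} (range cyl))"
  unfolding Int_stable_def using cyl_inter by auto

lemma sets_borel_cyl: "sets (borel :: seq measure) = sigma_sets UNIV (insert {} (range cyl))"
  unfolding sets_borel
proof (rule sigma_sets_eqI)
  fix S :: "seq set" assume "S \<in> {S. open S}"
  then have S: "open S" by simp
  have "S = \<Union> {c \<in> range cyl. c \<subseteq> S}"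
  proof
    show "S \<subseteq> \<Union> {c \<in> range cyl. c \<subseteq> S}"
    proof
      fix x assume "x \<in> S"
      then obtain N where "cyl (map x [0..<N]) \<subseteq> S" using cyl_basis[OF S] by blast
      moreover have "x \<in> cyl (map x [0..<N])" by (simp add: cyl_def)
      ultimately show "x \<in> \<Union> {c \<in> range cyl. c \<subseteq> S}" by blast
    qed
  qed blast
  also have "\<dots> \<in> sigma_sets UNIV (insert {} (range cyl))"
    by (rule sigma_sets_UNION) (auto intro: sigma_sets.Basic)
  finally show "S \<in> sigma_sets UNIV (insert {} (range cyl))" .
next
  fix c assume "c \<in> insert {} (range (cyl :: bool list \<Rightarrow> seq set))"
  then show "c \<in> sigma_sets UNIV {S. open S}"
    by (auto intro: sigma_sets.Basic sigma_sets.Empty open_cyl)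
qed

lemma cont_shift: "continuous_on UNIV shift"
  unfolding shift_def by (intro continuous_on_coordinatewise_then_product continuous_on_product_coordinates)

lemma meas_shift: "shift \<in> measurable borel borel"
  by (rule borel_measurable_continuous_onI[OF cont_shift])

context
  fixes H :: "seq \<Rightarrow> real" and H0 H1 :: "nat \<Rightarrow> real" and \<beta> lam :: real and \<nu> :: "seq measure"
  assumes rdw: "reduced_double_well H H0 H1"
    and lam_pos: "lam > 0"
    and nu_prob: "prob_space \<nu>"
    and nu_sets: "sets \<nu> = sets (borel :: seq measure)"
    and nu_eigen: "\<forall>f::seq \<Rightarrow> real. continuous_on UNIV f \<longrightarrow>
                     (\<integral>x. transfer H \<beta> f x \<partial>\<nu>) = lam * (\<integral>x. f x \<partial>\<nu>)"
begin

lemma space_nu: "space \<nu> = UNIV"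
  using sets_eq_imp_space_eq[OF nu_sets] by simp

lemma meas_nu: "measurable \<nu> N = measurable borel N"
  by (rule measurable_cong_sets[OF nu_sets refl])

lemma cont_meas: "continuous_on UNIV (f :: seq \<Rightarrow> real) \<Longrightarrow> f \<in> borel_measurable \<nu>"
  unfolding meas_nu by (rule borel_measurable_continuous_onI)

lemma cyl_sets: "cyl w \<in> sets \<nu>"
  unfolding nu_sets by (rule borel_open[OF open_cyl])

lemma meas_ind: "measure \<nu> (cyl w) = (\<integral>x. indicator (cyl w) x \<partial>\<nu>)"
  by (simp add: space_nu)

lemma K1:
  assumes g: "continuous_on UNIV g"
  shows "lam * (\<integral>x. indicator (cyl (a # w)) x * g x \<partial>\<nu>) =
         (\<integral>x. indicator (cyl w) x * (exp (- \<beta> * H (scons a x)) * g (scons a x)) \<partial>\<nu>)"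
proof -
  have c: "continuous_on UNIV (\<lambda>x. indicator (cyl (a # w)) x * g x)"
    by (intro continuous_on_mult cont_ind_cyl g)
  have e: "transfer H \<beta> (\<lambda>x. indicator (cyl (a # w)) x * g x) =
        (\<lambda>x. indicator (cyl w) x * (exp (- \<beta> * H (scons a x)) * g (scons a x)))"
    by (rule ext, cases a) (simp_all add: transfer_def indicator_def scons_cyl)
  show ?thesis using nu_eigen[rule_format, OF c] unfolding e by (rule sym)
qed

lemma M1:
  assumes n: "1 \<le> n"
  shows "lam * measure \<nu> (cyl (b # replicate n b @ [\<not> b])) = measure \<nu> (cyl (replicate n b @ [\<not> b]))"
proof -
  let ?w = "replicate n b @ [\<not> b]"
  have pw: "indicator (cyl ?w) x * (exp (- \<beta> * H (scons b x)) * 1) = indicator (cyl ?w) x" for x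
  proof (cases "x \<in> cyl ?w")
    case True
    then have "x 0 = b" using n by (simp add: cyl_rep)
    then have "scons b x \<in> cyl [b, b]" by (simp add: cyl_two)
    then show ?thesis using rdw_bb[OF rdw] by simp
  qed simp
  have "lam * measure \<nu> (cyl (b # ?w)) = lam * (\<integral>x. indicator (cyl (b # ?w)) x * 1 \<partial>\<nu>)"
    by (simp add: meas_ind)
  also have "\<dots> = (\<integral>x. indicator (cyl ?w) x * (exp (- \<beta> * H (scons b x)) * 1) \<partial>\<nu>)"
    by (rule K1) simp
  also have "\<dots> = (\<integral>x. indicator (cyl ?w) x \<partial>\<nu>)"
    by (rule Bochner_Integration.integral_cong[OF refl]) (rule pw)
  also have "\<dots> = measure \<nu> (cyl ?w)" by (simp add: meas_ind)
  finally show ?thesis .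
qed

lemma M2:
  assumes n: "1 \<le> n"
  shows "lam * measure \<nu> (cyl ((\<not> b) # replicate n b @ [\<not> b])) = exp (- \<beta> * hh H0 H1 b n) * measure \<nu> (cyl (replicate n b @ [\<not> b]))"
proof -
  let ?w = "replicate n b @ [\<not> b]"
  have pw: "indicator (cyl ?w) x * (exp (- \<beta> * H (scons (\<not> b) x)) * 1) = exp (- \<beta> * hh H0 H1 b n) * indicator (cyl ?w) x" for x
  proof (cases "x \<in> cyl ?w")
    case True
    then have "scons (\<not> b) x \<in> cyl ((\<not> b) # ?w)" by (simp add: scons_cyl)
    then show ?thesis using rdw_hh[OF rdw n] True by simp
  qed simp
  have "lam * measure \<nu> (cyl ((\<not> b) # ?w)) = lam * (\<integral>x. indicator (cyl ((\<not> b) # ?w)) x * 1 \<partial>\<nu>)"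
    by (simp add: meas_ind)
  also have "\<dots> = (\<integral>x. indicator (cyl ?w) x * (exp (- \<beta> * H (scons (\<not> b) x)) * 1) \<partial>\<nu>)"
    by (rule K1) simp
  also have "\<dots> = (\<integral>x. exp (- \<beta> * hh H0 H1 b n) * indicator (cyl ?w) x \<partial>\<nu>)"
    by (rule Bochner_Integration.integral_cong[OF refl]) (rule pw)
  also have "\<dots> = exp (- \<beta> * hh H0 H1 b n) * measure \<nu> (cyl ?w)" by (simp add: meas_ind)
  finally show ?thesis .
qed

lemma Mn: "1 \<le> n \<Longrightarrow> measure \<nu> (cyl (replicate n b @ [\<not> b])) = measure \<nu> (cyl [b, \<not> b]) / lam ^ (n - 1)"
proof (induction n rule: nat_induct_at_least)
  case base then show ?case by simp
next
  case (Suc n)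
  define A where "A m = measure \<nu> (cyl (replicate m b @ [\<not> b]))" for m
  have s: "lam * A (Suc n) = A n"
    using M1[OF Suc.hyps(1), of b] by (simp add: A_def)
  have ih: "A n = A 1 / lam ^ (n - 1)" using Suc.IH by (simp add: A_def)
  have p: "lam ^ (Suc n - 1) = lam * lam ^ (n - 1)" using Suc.hyps by (cases n) auto
  have "A (Suc n) = A 1 / lam ^ (Suc n - 1)"
    unfolding p using s ih lam_pos by (simp add: field_simps)
  then show ?case by (simp add: A_def)
qed

lemma Mw: "1 \<le> n \<Longrightarrow> measure \<nu> (cyl ((\<not> b) # replicate n b @ [\<not> b])) = exp (- \<beta> * hh H0 H1 b n) * measure \<nu> (cyl [b, \<not> b]) / lam ^ n"
proof -
  assume n: "1 \<le> n"
  have "lam * measure \<nu> (cyl ((\<not> b) # replicate n b @ [\<not> b])) = exp (- \<beta> * hh H0 H1 b n) * (measure \<nu> (cyl [b, \<not> b]) / lam ^ (n - 1))"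
    using M2[OF n, of b] Mn[OF n, of b] by simp
  moreover have "lam ^ n = lam * lam ^ (n - 1)" using n by (cases n) auto
  ultimately show ?thesis using lam_pos by (simp add: field_simps)
qed

lemma J_cont: "continuous_on UNIV (\<lambda>x. lam * exp (\<beta> * H x))"
  by (intro continuous_intros rdw_cont[OF rdw])

lemma J_meas: "(\<lambda>x. lam * exp (\<beta> * H x)) \<in> borel_measurable \<nu>"
  by (rule cont_meas[OF J_cont])

lemma J_bound: "\<exists>B. \<forall>x. \<bar>lam * exp (\<beta> * H x)\<bar> \<le> B"
proof -
  have "bounded (range (\<lambda>x. lam * exp (\<beta> * H x)))"
    by (rule compact_imp_bounded[OF compact_continuous_image[OF J_cont compact_UNIV_seq]])
  then show ?thesis unfolding bounded_iff by auto
qed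

lemma J_cyl:
  "lam * (\<integral>x. indicator (cyl (a # w)) x * exp (\<beta> * H x) \<partial>\<nu>) = measure \<nu> (cyl w)"
proof -
  have "lam * (\<integral>x. indicator (cyl (a # w)) x * exp (\<beta> * H x) \<partial>\<nu>) =
     (\<integral>x. indicator (cyl w) x * (exp (- \<beta> * H (scons a x)) * exp (\<beta> * H (scons a x))) \<partial>\<nu>)"
    by (rule K1) (intro continuous_intros rdw_cont[OF rdw])
  also have "\<dots> = (\<integral>x. indicator (cyl w) x \<partial>\<nu>)"
    by (rule Bochner_Integration.integral_cong[OF refl]) (simp add: exp_minus field_simps)
  finally show ?thesis by (simp add: meas_ind)
qed

lemma jac_eq:
  fixes a :: bool
  defines "D \<equiv> density \<nu> (\<lambda>x. ennreal (indicator (cyl [a]) x * (lam * exp (\<beta> * H x))))"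
  shows "distr D borel shift = \<nu>"
proof -
  interpret P: prob_space \<nu> by (rule nu_prob)
  let ?g = "\<lambda>x. indicator (cyl [a]) x * (lam * exp (\<beta> * H x))"
  have gm: "?g \<in> borel_measurable \<nu>"
    by (intro cont_meas continuous_on_mult cont_ind_cyl J_cont)
  have sD: "sets D = sets borel" by (simp add: D_def nu_sets)
  have spD: "space D = UNIV" using sets_eq_imp_space_eq[OF sD] by simp
  have shD: "shift \<in> measurable D borel"
    unfolding measurable_cong_sets[OF sD refl] by (rule meas_shift)
  have eq: "emeasure (distr D borel shift) (cyl w) = emeasure \<nu> (cyl w)" for w
  proof -
    have "emeasure (distr D borel shift) (cyl w) = emeasure D (shift -` cyl w \<inter> space D)"
      by (rule emeasure_distr[OF shD borel_open[OF open_cyl]])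
    also have "\<dots> = emeasure D (shift -` cyl w)" by (simp add: spD)
    also have "\<dots> = (\<integral>\<^sup>+x. ennreal (?g x) * indicator (shift -` cyl w) x \<partial>\<nu>)"
      unfolding D_def
    proof (rule emeasure_density)
      show "(\<lambda>x. ennreal (?g x)) \<in> borel_measurable \<nu>" using gm by simp
      have "shift \<in> measurable \<nu> borel" unfolding meas_nu by (rule meas_shift)
      then have "shift -` cyl w \<inter> space \<nu> \<in> sets \<nu>"
        by (rule measurable_sets) (rule borel_open[OF open_cyl])
      then show "shift -` cyl w \<in> sets \<nu>" by (simp add: space_nu)
    qed
    also have "\<dots> = (\<integral>\<^sup>+x. ennreal (indicator (cyl (a # w)) x * (lam * exp (\<beta> * H x))) \<partial>\<nu>)"
    proof (rule nn_integral_cong)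
      fix x
      show "ennreal (?g x) * indicator (shift -` cyl w) x =
            ennreal (indicator (cyl (a # w)) x * (lam * exp (\<beta> * H x)))"
        by (cases "x 0 = a"; cases "shift x \<in> cyl w") (simp_all add: cyl_Cons_shift cyl_Nil indicator_def)
    qed
    also have "\<dots> = ennreal (\<integral>x. indicator (cyl (a # w)) x * (lam * exp (\<beta> * H x)) \<partial>\<nu>)"
    proof (rule nn_integral_eq_integral)
      obtain B where B: "\<forall>x. \<bar>lam * exp (\<beta> * H x)\<bar> \<le> B" using J_bound by blast
      have B0: "0 \<le> B" using B[rule_format, of undefined] by (meson abs_ge_zero order_trans)
      show "integrable \<nu> (\<lambda>x. indicator (cyl (a # w)) x * (lam * exp (\<beta> * H x)))"
      proof (rule P.integrable_const_bound[where B=B])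
        show "AE x in \<nu>. norm (indicator (cyl (a # w)) x * (lam * exp (\<beta> * H x))) \<le> B"
          using B B0 by (intro AE_I2) (auto simp: indicator_def abs_mult)
        show "(\<lambda>x. indicator (cyl (a # w)) x * (lam * exp (\<beta> * H x))) \<in> borel_measurable \<nu>"
          by (intro cont_meas continuous_on_mult cont_ind_cyl J_cont)
      qed
      show "AE x in \<nu>. 0 \<le> indicator (cyl (a # w)) x * (lam * exp (\<beta> * H x))"
        using lam_pos by (intro AE_I2) simp
    qed
    also have "(\<integral>x. indicator (cyl (a # w)) x * (lam * exp (\<beta> * H x)) \<partial>\<nu>) =
               lam * (\<integral>x. indicator (cyl (a # w)) x * exp (\<beta> * H x) \<partial>\<nu>)"
      by (simp add: mult.left_commute)
    also have "\<dots> = measure \<nu> (cyl w)" by (rule J_cyl)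
    finally show ?thesis by (simp add: P.emeasure_eq_measure)
  qed
  show ?thesis
  proof (rule measure_eqI_generator_eq[OF Int_stable_cyl _ _ _ _ _ _ _, where \<Omega> = UNIV and A = "\<lambda>_. cyl []"])
    show "insert {} (range cyl) \<subseteq> Pow UNIV" by simp
    show "\<And>X. X \<in> insert {} (range cyl) \<Longrightarrow> emeasure (distr D borel shift) X = emeasure \<nu> X"
      using eq by auto
    show "sets (distr D borel shift) = sigma_sets UNIV (insert {} (range cyl))"
      by (simp add: sets_borel_cyl)
    show "sets \<nu> = sigma_sets UNIV (insert {} (range cyl))"
      by (simp add: nu_sets sets_borel_cyl)
    show "range (\<lambda>_. cyl []) \<subseteq> insert {} (range cyl)" by auto
    show "(\<Union>i. cyl []) = (UNIV :: seq set)" by (simp add: cyl_Nil)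
    show "\<And>i. emeasure (distr D borel shift) (cyl []) \<noteq> \<infinity>"
      using eq[of "[]"] by (simp add: P.emeasure_eq_measure)
  qed
qed

lemma jacobian: "is_jacobian \<nu> (\<lambda>x. lam * exp (\<beta> * H x))"
  unfolding is_jacobian_def
proof (intro conjI allI impI)
  show "(\<lambda>x. lam * exp (\<beta> * H x)) \<in> borel_measurable \<nu>" by (rule J_meas)
  show "0 \<le> lam * exp (\<beta> * H x)" for x using lam_pos by simp
  fix f :: "seq \<Rightarrow> real" assume f: "f \<in> borel_measurable \<nu> \<and> bounded (range f)"
  have fb: "f \<in> borel_measurable borel" using f unfolding meas_nu by blast
  have gen: "(\<integral>x. indicator (cyl [a]) x * f (shift x) * (lam * exp (\<beta> * H x)) \<partial>\<nu>) = (\<integral>x. f x \<partial>\<nu>)" for a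
  proof -
    let ?g = "\<lambda>x. indicator (cyl [a]) x * (lam * exp (\<beta> * H x))"
    define D where "D = density \<nu> (\<lambda>x. ennreal (?g x))"
    have sD: "sets D = sets borel" by (simp add: D_def nu_sets)
    have shD: "shift \<in> measurable D borel"
      unfolding measurable_cong_sets[OF sD refl] by (rule meas_shift)
    have gm: "?g \<in> borel_measurable \<nu>"
      by (intro cont_meas continuous_on_mult cont_ind_cyl J_cont)
    have "(\<integral>x. f x \<partial>\<nu>) = (\<integral>x. f x \<partial>(distr D borel shift))"
      using jac_eq[of a] by (simp add: D_def)
    also have "\<dots> = (\<integral>x. f (shift x) \<partial>D)"
      by (rule integral_distr[OF shD fb])
    also have "\<dots> = (\<integral>x. ?g x *\<^sub>R f (shift x) \<partial>\<nu>)"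
      unfolding D_def
    proof (rule integral_density)
      show "(\<lambda>x. f (shift x)) \<in> borel_measurable \<nu>"
        using measurable_comp[OF meas_shift fb] unfolding meas_nu by (simp add: comp_def)
      show "?g \<in> borel_measurable \<nu>" by (rule gm)
      show "AE x in \<nu>. 0 \<le> ?g x" using lam_pos by (intro AE_I2) simp
    qed
    also have "\<dots> = (\<integral>x. indicator (cyl [a]) x * f (shift x) * (lam * exp (\<beta> * H x)) \<partial>\<nu>)"
      by (simp add: mult_ac)
    finally show ?thesis by simp
  qed
  show "(\<integral>x. indicator (cyl [False]) x * f (shift x) * (lam * exp (\<beta> * H x)) \<partial>\<nu>) = (\<integral>x. f x \<partial>\<nu>)" by (rule gen)
  show "(\<integral>x. indicator (cyl [True]) x * f (shift x) * (lam * exp (\<beta> * H x)) \<partial>\<nu>) = (\<integral>x. f x \<partial>\<nu>)" by (rule gen)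
qed

end


theorem proposition3p4:
  fixes H :: "seq \<Rightarrow> real" and H0 H1 :: "nat \<Rightarrow> real"
    and \<beta> lam :: real and \<Phi> :: "seq \<Rightarrow> real" and \<nu> :: "seq measure"
  assumes rdw: "reduced_double_well H H0 H1"
    and beta: "\<beta> > 0"
    and Phi_cont: "continuous_on UNIV \<Phi>"
    and Phi_pos: "\<forall>x. 0 < \<Phi> x"
    and Phi_max: "(\<forall>x. \<Phi> x \<le> 1) \<and> (\<exists>x. \<Phi> x = 1)"
    and lam_pos: "lam > 0"
    and eigen: "\<forall>x. transfer H \<beta> \<Phi> x = lam * \<Phi> x"
    and nu_prob: "prob_space \<nu>"
    and nu_sets: "sets \<nu> = sets (borel :: seq measure)"
    and nu_eigen: "\<forall>f::seq \<Rightarrow> real. continuous_on UNIV f \<longrightarrow>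
                     (\<integral>x. transfer H \<beta> f x \<partial>\<nu>) = lam * (\<integral>x. f x \<partial>\<nu>)"
  shows
    "(\<forall>n\<ge>1. \<forall>x \<in> cyl (replicate n False @ [True]). \<forall>y \<in> cyl (replicate n False @ [True]). \<Phi> x = \<Phi> y) \<and>
     (\<forall>n\<ge>1. \<forall>x \<in> cyl (replicate n True @ [False]). \<forall>y \<in> cyl (replicate n True @ [False]). \<Phi> x = \<Phi> y) \<and>
     (\<exists>J. is_jacobian \<nu> J \<and>
        (\<forall>x \<in> cyl [True, True]. J x = lam) \<and>
        (\<forall>x \<in> cyl [False, False]. J x = lam) \<and>
        (\<forall>n\<ge>1. \<forall>x \<in> cyl ([False] @ replicate n True @ [False]). J x = lam * exp (\<beta> * H0 n)) \<and>
        (\<forall>n\<ge>1. \<forall>x \<in> cyl ([True] @ replicate n False @ [True]). J x = lam * exp (\<beta> * H1 n))) \<and>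
     (\<forall>n\<ge>1. \<forall>x \<in> cyl (replicate n False @ [True]).
        (\<lambda>k. exp (- \<beta> * H1 (n + k)) / lam ^ (k + 1) * \<Phi> (pt [True, False])) sums \<Phi> x) \<and>
     \<Phi> (\<lambda>_. False) = exp (- \<beta> * lim H1) / (lam - 1) * \<Phi> (pt [True, False]) \<and>
     (\<forall>n\<ge>1. \<forall>x \<in> cyl (replicate n True @ [False]).
        (\<lambda>k. exp (- \<beta> * H0 (n + k)) / lam ^ (k + 1) * \<Phi> (pt [False, True])) sums \<Phi> x) \<and>
     \<Phi> (\<lambda>_. True) = exp (- \<beta> * lim H0) / (lam - 1) * \<Phi> (pt [False, True]) \<and>
     (lim H0 = 0 \<and> lim H1 = 0 \<longrightarrow>
        (SUP x. \<Phi> x) = max (\<Phi> (\<lambda>_. False)) (\<Phi> (\<lambda>_. True)) \<and>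
        max (\<Phi> (\<lambda>_. False)) (\<Phi> (\<lambda>_. True)) = 1) \<and>
     (\<forall>n\<ge>1. measure \<nu> (cyl (replicate n True @ [False])) = measure \<nu> (cyl [True, False]) / lam ^ (n - 1)) \<and>
     (\<forall>n\<ge>1. measure \<nu> (cyl (replicate n False @ [True])) = measure \<nu> (cyl [False, True]) / lam ^ (n - 1)) \<and>
     (\<forall>n\<ge>1. measure \<nu> (cyl ([False] @ replicate n True @ [False])) =
                exp (- \<beta> * H0 n) * measure \<nu> (cyl [True, False]) / lam ^ n) \<and>
     (\<forall>n\<ge>1. measure \<nu> (cyl ([True] @ replicate n False @ [True])) =
                exp (- \<beta> * H1 n) * measure \<nu> (cyl [False, True]) / lam ^ n)"
proof -
  have Phi_le: "\<forall>x. \<Phi> x \<le> 1" using Phi_max by blast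
  note ctx = rdw Phi_cont Phi_pos Phi_le lam_pos eigen
  note nctx = rdw lam_pos nu_prob nu_sets nu_eigen
  have qqF: "qq False = pt [True, False]"
    by (rule ext) (simp add: qq_def pt_def scons_def split: nat.split)
  have qqT: "\<Phi> (qq True) = \<Phi> (pt [False, True])"
  proof (rule G_const[OF ctx, where n=1 and b=False])
    show "qq True \<in> cyl (replicate 1 False @ [\<not> False])" by (simp add: qq_def cyl_two)
    show "pt [False, True] \<in> cyl (replicate 1 False @ [\<not> False])" using pt_cyl[of "[False, True]"] by simp
  qed simp
  have hhF: "hh H0 H1 False = H1" by (rule ext) (simp add: hh_def)
  have hhT: "hh H0 H1 True = H0" by (rule ext) (simp add: hh_def)
  have limF: "lim H1 = H (qq False)" using G_lim[OF ctx, of False] hhF by simp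
  have limT: "lim H0 = H (qq True)" using G_lim[OF ctx, of True] hhT by simp
  have P1: "\<forall>n\<ge>1. \<forall>x \<in> cyl (replicate n False @ [True]). \<forall>y \<in> cyl (replicate n False @ [True]). \<Phi> x = \<Phi> y"
  proof (intro allI impI ballI)
    fix n x y assume "1 \<le> (n::nat)" "x \<in> cyl (replicate n False @ [True])" "y \<in> cyl (replicate n False @ [True])"
    then show "\<Phi> x = \<Phi> y" by (intro G_const[OF ctx, where b=False]) simp_all
  qed
  have P2: "\<forall>n\<ge>1. \<forall>x \<in> cyl (replicate n True @ [False]). \<forall>y \<in> cyl (replicate n True @ [False]). \<Phi> x = \<Phi> y"
  proof (intro allI impI ballI)
    fix n x y assume "1 \<le> (n::nat)" "x \<in> cyl (replicate n True @ [False])" "y \<in> cyl (replicate n True @ [False])"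
    then show "\<Phi> x = \<Phi> y" by (intro G_const[OF ctx, where b=True]) simp_all
  qed
  have P3: "\<exists>J. is_jacobian \<nu> J \<and>
        (\<forall>x \<in> cyl [True, True]. J x = lam) \<and>
        (\<forall>x \<in> cyl [False, False]. J x = lam) \<and>
        (\<forall>n\<ge>1. \<forall>x \<in> cyl ([False] @ replicate n True @ [False]). J x = lam * exp (\<beta> * H0 n)) \<and>
        (\<forall>n\<ge>1. \<forall>x \<in> cyl ([True] @ replicate n False @ [True]). J x = lam * exp (\<beta> * H1 n))"
  proof (intro exI[of _ "\<lambda>x. lam * exp (\<beta> * H x)"] conjI ballI allI impI)
    show "is_jacobian \<nu> (\<lambda>x. lam * exp (\<beta> * H x))" by (rule jacobian[OF nctx])
    show "lam * exp (\<beta> * H x) = lam" if "x \<in> cyl [True, True]" for x using rdw_11[OF rdw that] by simp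
    show "lam * exp (\<beta> * H x) = lam" if "x \<in> cyl [False, False]" for x using rdw_00[OF rdw that] by simp
    show "lam * exp (\<beta> * H x) = lam * exp (\<beta> * H0 n)" if "1 \<le> n" "x \<in> cyl ([False] @ replicate n True @ [False])" for n x
      using rdw_H0[OF rdw that] by simp
    show "lam * exp (\<beta> * H x) = lam * exp (\<beta> * H1 n)" if "1 \<le> n" "x \<in> cyl ([True] @ replicate n False @ [True])" for n x
      using rdw_H1[OF rdw that] by simp
  qed
  have P4: "\<forall>n\<ge>1. \<forall>x \<in> cyl (replicate n False @ [True]).
        (\<lambda>k. exp (- \<beta> * H1 (n + k)) / lam ^ (k + 1) * \<Phi> (pt [True, False])) sums \<Phi> x"
  proof (intro allI impI ballI)
    fix n x assume "1 \<le> (n::nat)" "x \<in> cyl (replicate n False @ [True])"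
    then show "(\<lambda>k. exp (- \<beta> * H1 (n + k)) / lam ^ (k + 1) * \<Phi> (pt [True, False])) sums \<Phi> x"
      using G_sums[OF ctx, where b=False and n=n and x=x] by (simp add: hhF qqF)
  qed
  have P5: "\<Phi> (\<lambda>_. False) = exp (- \<beta> * lim H1) / (lam - 1) * \<Phi> (pt [True, False])"
    using G_fix[OF ctx, of False] limF qqF by simp
  have P6: "\<forall>n\<ge>1. \<forall>x \<in> cyl (replicate n True @ [False]).
        (\<lambda>k. exp (- \<beta> * H0 (n + k)) / lam ^ (k + 1) * \<Phi> (pt [False, True])) sums \<Phi> x"
  proof (intro allI impI ballI)
    fix n x assume "1 \<le> (n::nat)" "x \<in> cyl (replicate n True @ [False])"
    then show "(\<lambda>k. exp (- \<beta> * H0 (n + k)) / lam ^ (k + 1) * \<Phi> (pt [False, True])) sums \<Phi> x"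
      using G_sums[OF ctx, where b=True and n=n and x=x] by (simp add: hhT qqT)
  qed
  have P7: "\<Phi> (\<lambda>_. True) = exp (- \<beta> * lim H0) / (lam - 1) * \<Phi> (pt [False, True])"
    using G_fix[OF ctx, of True] limT qqT by simp
  have P8: "lim H0 = 0 \<and> lim H1 = 0 \<longrightarrow>
        (SUP x. \<Phi> x) = max (\<Phi> (\<lambda>_. False)) (\<Phi> (\<lambda>_. True)) \<and>
        max (\<Phi> (\<lambda>_. False)) (\<Phi> (\<lambda>_. True)) = 1"
  proof
    assume l: "lim H0 = 0 \<and> lim H1 = 0"
    have Hq: "H (qq b) = 0" for b using l limF limT by (cases b) auto
    have le: "\<Phi> x \<le> max (\<Phi> (\<lambda>_. False)) (\<Phi> (\<lambda>_. True))" for x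
    proof -
      have "\<Phi> x \<le> \<Phi> (\<lambda>_. x 0)"
        using point_cases[of x]
      proof
        assume "x = (\<lambda>_. x 0)" then show ?thesis by simp
      next
        assume "\<exists>n\<ge>1. x \<in> cyl (replicate n (x 0) @ [\<not> x 0])"
        then obtain n where "1 \<le> n" "x \<in> cyl (replicate n (x 0) @ [\<not> x 0])" by blast
        then show ?thesis using G_lt[OF ctx beta Hq] by (meson less_imp_le)
      qed
      then show ?thesis by (cases "x 0") auto
    qed
    obtain z where z: "\<Phi> z = 1" using Phi_max by blast
    have m1: "max (\<Phi> (\<lambda>_. False)) (\<Phi> (\<lambda>_. True)) = 1"
    proof -
      have "1 \<le> max (\<Phi> (\<lambda>_. False)) (\<Phi> (\<lambda>_. True))" using le[of z] z by simp
      moreover have "max (\<Phi> (\<lambda>_. False)) (\<Phi> (\<lambda>_. True)) \<le> 1"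
        using Phi_le[rule_format, of "\<lambda>_. False"] Phi_le[rule_format, of "\<lambda>_. True"] by simp
      ultimately show ?thesis by linarith
    qed
    have "(SUP x. \<Phi> x) = 1"
      by (rule cSup_eq_maximum) (use z Phi_le in auto)
    then show "(SUP x. \<Phi> x) = max (\<Phi> (\<lambda>_. False)) (\<Phi> (\<lambda>_. True)) \<and>
        max (\<Phi> (\<lambda>_. False)) (\<Phi> (\<lambda>_. True)) = 1" using m1 by simp
  qed
  have P9: "\<forall>n\<ge>1. measure \<nu> (cyl (replicate n True @ [False])) = measure \<nu> (cyl [True, False]) / lam ^ (n - 1)"
  proof (intro allI impI)
    fix n :: nat assume "1 \<le> n"
    then show "measure \<nu> (cyl (replicate n True @ [False])) = measure \<nu> (cyl [True, False]) / lam ^ (n - 1)"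
      using Mn[OF nctx, where b=True and n=n] by simp
  qed
  have P10: "\<forall>n\<ge>1. measure \<nu> (cyl (replicate n False @ [True])) = measure \<nu> (cyl [False, True]) / lam ^ (n - 1)"
  proof (intro allI impI)
    fix n :: nat assume "1 \<le> n"
    then show "measure \<nu> (cyl (replicate n False @ [True])) = measure \<nu> (cyl [False, True]) / lam ^ (n - 1)"
      using Mn[OF nctx, where b=False and n=n] by simp
  qed
  have P11: "\<forall>n\<ge>1. measure \<nu> (cyl ([False] @ replicate n True @ [False])) =
                exp (- \<beta> * H0 n) * measure \<nu> (cyl [True, False]) / lam ^ n"
  proof (intro allI impI)
    fix n :: nat assume "1 \<le> n"
    then show "measure \<nu> (cyl ([False] @ replicate n True @ [False])) =
                exp (- \<beta> * H0 n) * measure \<nu> (cyl [True, False]) / lam ^ n"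
      using Mw[OF nctx, where b=True and n=n] by (simp add: hhT)
  qed
  have P12: "\<forall>n\<ge>1. measure \<nu> (cyl ([True] @ replicate n False @ [True])) =
                exp (- \<beta> * H1 n) * measure \<nu> (cyl [False, True]) / lam ^ n"
  proof (intro allI impI)
    fix n :: nat assume "1 \<le> n"
    then show "measure \<nu> (cyl ([True] @ replicate n False @ [True])) =
                exp (- \<beta> * H1 n) * measure \<nu> (cyl [False, True]) / lam ^ n"
      using Mw[OF nctx, where b=False and n=n] by (simp add: hhF)
  qed
  show ?thesis using P1 P2 P3 P4 P5 P6 P7 P8 P9 P10 P11 P12 by (intro conjI)
qed

end
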